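(* Let $P$ be a weakly ranked poset, let $\kappa$ be a $P$-kernel, and let $f,g\in\mathscr{I}_{1/2}(P)$ be its right and left KLS-functions. Suppose $x\in P$ and $h\in\mathscr{I}_{1/2}(P)$ satisfy $(\bar h f)_{xz}(t)=(h\bar f)_{xz}(t)$ for all $z\ge x$. Then $h_{xz}(t)=g_{xz}(t)$ for all $z\ge x$.
   Context: A weakly ranked poset is a locally finite poset $P$ (all intervals finite) with a weak rank function: integers $r_{xy}$ for $x\le y$ with $r_{xy}>0$ for $x<y$ and $r_{xy}+r_{yz}=r_{xz}$. $I(P)=\prod_{x\le y}\mathbb{Z}[t]$ with components $f_{xy}(t)$ is a ring under convolution $(fg)_{xz}=\sum_{x\le y\le z}f_{xy}g_{yz}$ with identity $\delta$ ($\delta_{xx}=1$, $\delta_{xy}=0$ for $x<y$). $\mathscr{I}(P)$ is the subring of $f$ with $\deg f_{xy}\le r_{xy}$; it has the involution $\bar f_{xy}(t)=t^{r_{xy}}f_{xy}(t^{-1})$. $\mathscr{I}_{1/2}(P)$ is the set of $f\in\mathscr{I}(P)$ with $f_{xx}=1$ for all $x$ and $\deg f_{xy}<r_{xy}/2$ for $x<y$. A $P$-kernel is $\kappa\in\mathscr{I}(P)$ with $\kappa_{xx}=1$ for all $x$ and $\kappa^{-1}=\bar\kappa$. For a $P$-kernel $\kappa$ there are unique $f,g\in\mathscr{I}_{1/2}(P)$ with $\bar f=\kappa f$ and $\bar g=g\kappa$; $f$ is the right and $g$ the left KLS-function of $\kappa$. *)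

theory Defs
  imports "HOL-Computational_Algebra.Polynomial"
begin

text \<open>The poset P is the carrier type 'a with its order. Elements of the incidence
algebra I(P) are functions 'a => 'a => int poly; only the components f x y with
x \<le> y are meaningful.\<close>

definition locally_finite :: "'a::order itself \<Rightarrow> bool" where
  "locally_finite _ \<longleftrightarrow> (\<forall>x y::'a. finite {x..y})"

definition weak_rank :: "('a::order \<Rightarrow> 'a \<Rightarrow> int) \<Rightarrow> bool" where
  "weak_rank r \<longleftrightarrow> (\<forall>x y. x < y \<longrightarrow> r x y > 0) \<and>
     (\<forall>x y z. x \<le> y \<longrightarrow> y \<le> z \<longrightarrow> r x y + r y z = r x z)"

definition weakly_ranked_poset :: "('a::order \<Rightarrow> 'a \<Rightarrow> int) \<Rightarrow> bool" where
  "weakly_ranked_poset r \<longleftrightarrow> locally_finite TYPE('a) \<and> weak_rank r"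

definition conv :: "('a::order \<Rightarrow> 'a \<Rightarrow> int poly) \<Rightarrow> ('a \<Rightarrow> 'a \<Rightarrow> int poly) \<Rightarrow> 'a \<Rightarrow> 'a \<Rightarrow> int poly" where
  "conv f g x z = (\<Sum>y\<in>{x..z}. f x y * g y z)"

definition delta :: "'a \<Rightarrow> 'a \<Rightarrow> int poly" where
  "delta x y = (if x = y then 1 else 0)"

text \<open>Involution: bar f_{xy}(t) = t^{r_{xy}} f_{xy}(t^{-1}) (for deg f_{xy} \<le> r_{xy}).\<close>
definition bar :: "('a \<Rightarrow> 'a \<Rightarrow> int) \<Rightarrow> ('a \<Rightarrow> 'a \<Rightarrow> int poly) \<Rightarrow> 'a \<Rightarrow> 'a \<Rightarrow> int poly" where
  "bar r f x y = (\<Sum>k\<le>nat (r x y). monom (coeff (f x y) (nat (r x y) - k)) k)"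

definition in_I :: "('a::order \<Rightarrow> 'a \<Rightarrow> int) \<Rightarrow> ('a \<Rightarrow> 'a \<Rightarrow> int poly) \<Rightarrow> bool" where
  "in_I r f \<longleftrightarrow> (\<forall>x y. x \<le> y \<longrightarrow> int (degree (f x y)) \<le> r x y)"

definition in_I_half :: "('a::order \<Rightarrow> 'a \<Rightarrow> int) \<Rightarrow> ('a \<Rightarrow> 'a \<Rightarrow> int poly) \<Rightarrow> bool" where
  "in_I_half r f \<longleftrightarrow> in_I r f \<and> (\<forall>x. f x x = 1) \<and>
     (\<forall>x y. x < y \<longrightarrow> 2 * int (degree (f x y)) < r x y)"

definition P_kernel :: "('a::order \<Rightarrow> 'a \<Rightarrow> int) \<Rightarrow> ('a \<Rightarrow> 'a \<Rightarrow> int poly) \<Rightarrow> bool" where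
  "P_kernel r \<kappa> \<longleftrightarrow> in_I r \<kappa> \<and> (\<forall>x. \<kappa> x x = 1) \<and>
     (\<forall>x y. x \<le> y \<longrightarrow> conv \<kappa> (bar r \<kappa>) x y = delta x y \<and> conv (bar r \<kappa>) \<kappa> x y = delta x y)"

definition right_KLS :: "('a::order \<Rightarrow> 'a \<Rightarrow> int) \<Rightarrow> ('a \<Rightarrow> 'a \<Rightarrow> int poly) \<Rightarrow> ('a \<Rightarrow> 'a \<Rightarrow> int poly) \<Rightarrow> bool" where
  "right_KLS r \<kappa> f \<longleftrightarrow> in_I_half r f \<and> (\<forall>x y. x \<le> y \<longrightarrow> bar r f x y = conv \<kappa> f x y)"

definition left_KLS :: "('a::order \<Rightarrow> 'a \<Rightarrow> int) \<Rightarrow> ('a \<Rightarrow> 'a \<Rightarrow> int poly) \<Rightarrow> ('a \<Rightarrow> 'a \<Rightarrow> int poly) \<Rightarrow> bool" where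
  "left_KLS r \<kappa> g \<longleftrightarrow> in_I_half r g \<and> (\<forall>x y. x \<le> y \<longrightarrow> bar r g x y = conv g \<kappa> x y)"

end

theory Submission
  imports Defs
begin

lemma conv_assoc:
  fixes a b c :: "'a::order \<Rightarrow> 'a \<Rightarrow> int poly"
  assumes fin: "\<And>u v::'a. finite {u..v}"
  shows "conv a (conv b c) x z = conv (conv a b) c x z"
proof -
  have "conv a (conv b c) x z = (\<Sum>y\<in>{x..z}. \<Sum>w\<in>{w. w \<in> {x..z} \<and> y \<le> w}. a x y * b y w * c w z)"
    unfolding conv_def
  proof (rule sum.cong[OF refl])
    fix y assume "y \<in> {x..z}"
    then have "{w. w \<in> {x..z} \<and> y \<le> w} = {y..z}" by auto
    then show "a x y * (\<Sum>w\<in>{y..z}. b y w * c w z) = (\<Sum>w\<in>{w. w \<in> {x..z} \<and> y \<le> w}. a x y * b y w * c w z)"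
      by (simp add: sum_distrib_left mult.assoc)
  qed
  also have "\<dots> = (\<Sum>w\<in>{x..z}. \<Sum>y\<in>{y. y \<in> {x..z} \<and> y \<le> w}. a x y * b y w * c w z)"
    by (rule sum.swap_restrict[OF fin fin])
  also have "\<dots> = conv (conv a b) c x z"
    unfolding conv_def
  proof (rule sum.cong[OF refl])
    fix w assume "w \<in> {x..z}"
    then have "{y. y \<in> {x..z} \<and> y \<le> w} = {x..w}" by auto
    then show "(\<Sum>y\<in>{y. y \<in> {x..z} \<and> y \<le> w}. a x y * b y w * c w z) = (\<Sum>y\<in>{x..w}. a x y * b y w) * c w z"
      by (simp add: sum_distrib_right)
  qed
  finally show ?thesis .
qed

lemma interval_induct:
  fixes x z :: "'a::order"
  assumes fin: "\<And>u v::'a. finite {u..v}"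
    and step: "\<And>z. x \<le> z \<Longrightarrow> (\<And>y. x \<le> y \<Longrightarrow> y < z \<Longrightarrow> P y) \<Longrightarrow> P z"
    and "x \<le> z"
  shows "P z"
  using assms(3)
proof (induction z rule: measure_induct_rule[where f="\<lambda>z. card {x..z}"])
  case (less z)
  show ?case
  proof (rule step[OF less.prems])
    fix y assume y: "x \<le> y" "y < z"
    have "{x..y} \<subset> {x..z}" using y by auto
    then have "card {x..y} < card {x..z}" by (rule psubset_card_mono[OF fin])
    then show "P y" using less.IH y by blast
  qed
qed

lemma bar_diff:
  "bar r h x z - bar r g x z = (\<Sum>k\<le>nat (r x z). monom (coeff (h x z - g x z) (nat (r x z) - k)) k)"
  unfolding bar_def by (simp add: sum_subtractf[symmetric] diff_monom)

lemma rev_self_zero: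
  fixes p :: "int poly"
  assumes deg: "2 * degree p < R"
    and eq: "(\<Sum>k\<le>R. monom (coeff p (R - k)) k) = p"
  shows "p = 0"
proof -
  let ?d = "degree p"
  have "coeff (\<Sum>k\<le>R. monom (coeff p (R - k)) k) (R - ?d) = (\<Sum>k\<le>R. if k = R - ?d then coeff p (R - k) else 0)"
    by (simp add: coeff_sum coeff_monom)
  also have "\<dots> = coeff p (R - (R - ?d))"
    by (subst sum.delta) auto
  also have "\<dots> = coeff p ?d" using deg by simp
  finally have "coeff p (R - ?d) = coeff p ?d" using eq by simp
  moreover have "coeff p (R - ?d) = 0" using deg by (intro coeff_eq_0) simp
  ultimately show ?thesis by simp
qed

theorem proposition2p8:
  fixes r :: "'a::order \<Rightarrow> 'a \<Rightarrow> int"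
    and \<kappa> f g h :: "'a \<Rightarrow> 'a \<Rightarrow> int poly"
    and x :: 'a
  assumes "weakly_ranked_poset r"
    and "P_kernel r \<kappa>"
    and "right_KLS r \<kappa> f"
    and "left_KLS r \<kappa> g"
    and "in_I_half r h"
    and "\<forall>z. x \<le> z \<longrightarrow> conv (bar r h) f x z = conv h (bar r f) x z"
  shows "\<forall>z. x \<le> z \<longrightarrow> h x z = g x z"
proof -
  have fin: "\<And>u v::'a. finite {u..v}"
    using assms(1) unfolding weakly_ranked_poset_def locally_finite_def by blast
  have kxx: "\<And>y. \<kappa> y y = 1" using assms(2) unfolding P_kernel_def by blast
  have fR: "in_I_half r f" "\<And>u v. u \<le> v \<Longrightarrow> bar r f u v = conv \<kappa> f u v"
    using assms(3) unfolding right_KLS_def by blast+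
  have gL: "in_I_half r g" "\<And>u v. u \<le> v \<Longrightarrow> bar r g u v = conv g \<kappa> u v"
    using assms(4) unfolding left_KLS_def by blast+
  have fzz: "\<And>y. f y y = 1" using fR(1) unfolding in_I_half_def by blast
  have A: "conv (bar r h) f x z = conv (conv h \<kappa>) f x z" if "x \<le> z" for z
  proof -
    have "conv h (bar r f) x z = conv h (conv \<kappa> f) x z"
      unfolding conv_def[of h] by (rule sum.cong[OF refl]) (simp add: fR(2))
    also have "\<dots> = conv (conv h \<kappa>) f x z" by (rule conv_assoc[OF fin])
    finally show ?thesis using assms(6) that by simp
  qed
  define D where "D y = bar r h x y - conv h \<kappa> x y" for y
  have B: "D z = 0" if "x \<le> z" for z
    using fin _ that
  proof (rule interval_induct)
    fix z assume xz: "x \<le> z" and IH: "\<And>y. x \<le> y \<Longrightarrow> y < z \<Longrightarrow> D y = 0"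
    have "(\<Sum>y\<in>{x..z}. D y * f y z) = conv (bar r h) f x z - conv (conv h \<kappa>) f x z"
      unfolding D_def conv_def by (simp add: sum_subtractf[symmetric] left_diff_distrib)
    also have "\<dots> = 0" using A[OF xz] by simp
    finally have s: "(\<Sum>y\<in>{x..z}. D y * f y z) = 0" .
    have "(\<Sum>y\<in>{x..z}. D y * f y z) = D z * f z z + (\<Sum>y\<in>{x..z} - {z}. D y * f y z)"
      using xz by (subst sum.remove[OF fin, of z]) auto
    also have "(\<Sum>y\<in>{x..z} - {z}. D y * f y z) = 0"
      by (rule sum.neutral) (auto simp: IH order.strict_iff_order)
    finally show "D z = 0" using s fzz by simp
  qed
  have C: "h x z = g x z" if "x \<le> z" for z
    using fin _ that
  proof (rule interval_induct)
    fix z assume xz: "x \<le> z" and IH: "\<And>y. x \<le> y \<Longrightarrow> y < z \<Longrightarrow> h x y = g x y"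
    show "h x z = g x z"
    proof (cases "x = z")
      case True
      then show ?thesis using assms(5) gL(1) unfolding in_I_half_def by simp
    next
      case False
      then have xz': "x < z" using xz by simp
      let ?p = "h x z - g x z"
      let ?R = "nat (r x z)"
      have "conv h \<kappa> x z - conv g \<kappa> x z = (\<Sum>y\<in>{x..z}. (h x y - g x y) * \<kappa> y z)"
        unfolding conv_def by (simp add: sum_subtractf[symmetric] left_diff_distrib)
      also have "\<dots> = (h x z - g x z) * \<kappa> z z + (\<Sum>y\<in>{x..z} - {z}. (h x y - g x y) * \<kappa> y z)"
        using xz by (subst sum.remove[OF fin, of z]) auto
      also have "(\<Sum>y\<in>{x..z} - {z}. (h x y - g x y) * \<kappa> y z) = 0"
        by (rule sum.neutral) (auto simp: IH order.strict_iff_order)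
      finally have c: "conv h \<kappa> x z - conv g \<kappa> x z = ?p" using kxx by simp
      have "bar r h x z - bar r g x z = conv h \<kappa> x z - conv g \<kappa> x z"
        using B[OF xz] gL(2)[OF xz] unfolding D_def by simp
      then have eq: "(\<Sum>k\<le>?R. monom (coeff ?p (?R - k)) k) = ?p"
        using c bar_diff by metis
      have dh: "2 * int (degree (h x z)) < r x z" using assms(5) xz' unfolding in_I_half_def by blast
      have dg: "2 * int (degree (g x z)) < r x z" using gL(1) xz' unfolding in_I_half_def by blast
      have "degree ?p \<le> max (degree (h x z)) (degree (g x z))" by (rule degree_diff_le_max)
      then have "2 * degree ?p < ?R" using dh dg by linarith
      then show ?thesis using rev_self_zero eq by fastforce
    qed
  qed
  show ?thesis using C by blast
qed

end
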